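(* Let $E$ be a Bratteli diagram with levels $(V_n)_{n\ge 0}$ such that $k_{vw} := |vE^1w| > n$ for every $n\in\mathbb{N}$, $v\in V_n$ and $w\in V_{n+1}$, and let $G$ be its graph groupoid. For each such $v,w$ label $vE^1w = \{(vw)_0,\dots,(vw)_{k_{vw}-1}\}$ and let $\alpha$ be the graph automorphism of $E$ fixing every vertex with $\alpha((vw)_i) = (vw)_{(i+1) \bmod k_{vw}}$. Then there is an automorphism $\alpha$ of the topological groupoid $G$ with $\alpha(x,m,y) = (\alpha(x), m, \alpha(y))$ for $(x,m,y)\in G$ (where $\alpha(x)_i = \alpha(x_i)$), and this automorphism satisfies: (W) if $x\in G^{(0)}$ and $l\in\mathbb{Z}$ satisfy $[x]=[\alpha^l(x)]$ then $l=0$; and (L) there is a basis $\mathcal{B}$ for the topology on $G^{(0)}$ of compact open bisections such that for every $V\in\mathcal{B}$ there is $l\ge1$ with $\alpha^{-l}(V)\subseteq V$.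
   Context: A Bratteli diagram is a row-finite directed graph $E$ (countable vertex set $E^0$, edge set $E^1$, maps $r,s:E^1\to E^0$) whose vertex set is partitioned into finite sets $V_n$, $n=0,1,2,\dots$, with $E^1 = \bigcup_n V_nE^1V_{n+1}$ (here $vE^1w = \{e : r(e)=v, s(e)=w\}$), such that $vE^1\ne\emptyset$ for all $v\in E^0$ and $E^1v\ne\emptyset$ for all $v\notin V_0$. Infinite paths are sequences $x = x_1x_2\dots$ of edges with $s(x_i)=r(x_{i+1})$; $E^\infty$ is the set of them, and $\sigma^n(x) = x_{n+1}x_{n+2}\dots$. For a finite path $\mu$, $Z(\mu) = \{x\in E^\infty : x \text{ begins with } \mu\}$. The graph groupoid is $G = \{(x,m-n,y) : x,y\in E^\infty, \sigma^m(x)=\sigma^n(y)\}$ with $(x,k,y)(y,l,z)=(x,k+l,z)$, $(x,k,y)^{-1}=(y,-k,x)$, unit space identified with $E^\infty$, and topology with basic open sets $Z(\mu,\nu)=\{(\mu z, |\mu|-|\nu|, \nu z) : z\in E^\infty\}$ for finite paths $\mu,\nu$ with $s(\mu)=s(\nu)$. For $u\in G^{(0)}$, $[u]=\{r(g): s(g)=u\}$. *)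

theory Defs
  imports "HOL-Analysis.Analysis"
begin

definition bratteli_diagram ::
  "(nat \<Rightarrow> 'v set) \<Rightarrow> 'e set \<Rightarrow> ('e \<Rightarrow> 'v) \<Rightarrow> ('e \<Rightarrow> 'v) \<Rightarrow> bool" where
  "bratteli_diagram V E1 r s \<longleftrightarrow>
     (\<forall>n. finite (V n)) \<and>
     (\<forall>m n. m \<noteq> n \<longrightarrow> V m \<inter> V n = {}) \<and>
     (\<forall>e\<in>E1. \<exists>n. r e \<in> V n \<and> s e \<in> V (Suc n)) \<and>
     (\<forall>v\<in>(\<Union>n. V n). finite {e\<in>E1. r e = v}) \<and>
     (\<forall>v\<in>(\<Union>n. V n). {e\<in>E1. r e = v} \<noteq> {}) \<and>
     (\<forall>n. \<forall>v\<in>V (Suc n). {e\<in>E1. s e = v} \<noteq> {})"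

definition edges_between :: "'e set \<Rightarrow> ('e \<Rightarrow> 'v) \<Rightarrow> ('e \<Rightarrow> 'v) \<Rightarrow> 'v \<Rightarrow> 'v \<Rightarrow> 'e set" where
  "edges_between E1 r s v w = {e\<in>E1. r e = v \<and> s e = w}"

definition kk :: "'e set \<Rightarrow> ('e \<Rightarrow> 'v) \<Rightarrow> ('e \<Rightarrow> 'v) \<Rightarrow> 'v \<Rightarrow> 'v \<Rightarrow> nat" where
  "kk E1 r s v w = card (edges_between E1 r s v w)"

definition inf_paths :: "'e set \<Rightarrow> ('e \<Rightarrow> 'v) \<Rightarrow> ('e \<Rightarrow> 'v) \<Rightarrow> (nat \<Rightarrow> 'e) set" where
  "inf_paths E1 r s = {x. (\<forall>i. x i \<in> E1) \<and> (\<forall>i. s (x i) = r (x (Suc i)))}"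

definition shift :: "nat \<Rightarrow> (nat \<Rightarrow> 'e) \<Rightarrow> (nat \<Rightarrow> 'e)" where
  "shift n x = (\<lambda>i. x (i + n))"

definition graph_groupoid ::
  "'e set \<Rightarrow> ('e \<Rightarrow> 'v) \<Rightarrow> ('e \<Rightarrow> 'v) \<Rightarrow> ((nat \<Rightarrow> 'e) \<times> int \<times> (nat \<Rightarrow> 'e)) set" where
  "graph_groupoid E1 r s =
     {(x, int m - int n, y) | x y m n. x \<in> inf_paths E1 r s \<and> y \<in> inf_paths E1 r s \<and>
                                      shift m x = shift n y}"

definition gmult :: "('a \<times> int \<times> 'a) \<Rightarrow> ('a \<times> int \<times> 'a) \<Rightarrow> ('a \<times> int \<times> 'a)" where
  "gmult g h = (fst g, fst (snd g) + fst (snd h), snd (snd h))"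

definition ginv :: "('a \<times> int \<times> 'a) \<Rightarrow> ('a \<times> int \<times> 'a)" where
  "ginv g = (snd (snd g), - fst (snd g), fst g)"

definition grange :: "('a \<times> int \<times> 'a) \<Rightarrow> ('a \<times> int \<times> 'a)" where
  "grange g = (fst g, 0, fst g)"

definition gsource :: "('a \<times> int \<times> 'a) \<Rightarrow> ('a \<times> int \<times> 'a)" where
  "gsource g = (snd (snd g), 0, snd (snd g))"

definition gunits ::
  "'e set \<Rightarrow> ('e \<Rightarrow> 'v) \<Rightarrow> ('e \<Rightarrow> 'v) \<Rightarrow> ((nat \<Rightarrow> 'e) \<times> int \<times> (nat \<Rightarrow> 'e)) set" where
  "gunits E1 r s = {(x, 0, x) | x. x \<in> inf_paths E1 r s}"

text \<open>Finite path mu with source u: a vertex u (mu = []) or consecutive edges with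
  s(last mu) = u.\<close>
definition fin_path :: "'v set \<Rightarrow> 'e set \<Rightarrow> ('e \<Rightarrow> 'v) \<Rightarrow> ('e \<Rightarrow> 'v) \<Rightarrow> 'v \<Rightarrow> 'e list \<Rightarrow> bool" where
  "fin_path E0 E1 r s u mu \<longleftrightarrow> u \<in> E0 \<and> set mu \<subseteq> E1 \<and>
     (\<forall>i. Suc i < length mu \<longrightarrow> s (mu ! i) = r (mu ! Suc i)) \<and>
     (mu \<noteq> [] \<longrightarrow> s (last mu) = u)"

definition pcat :: "'e list \<Rightarrow> (nat \<Rightarrow> 'e) \<Rightarrow> (nat \<Rightarrow> 'e)" where
  "pcat mu z = (\<lambda>i. if i < length mu then mu ! i else z (i - length mu))"

definition Zset :: "'e set \<Rightarrow> ('e \<Rightarrow> 'v) \<Rightarrow> ('e \<Rightarrow> 'v) \<Rightarrow> 'e list \<Rightarrow> 'e list \<Rightarrow> 'v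
                    \<Rightarrow> ((nat \<Rightarrow> 'e) \<times> int \<times> (nat \<Rightarrow> 'e)) set" where
  "Zset E1 r s mu nu u =
     {(pcat mu z, int (length mu) - int (length nu), pcat nu z) | z.
        z \<in> inf_paths E1 r s \<and> r (z 0) = u}"

definition groupoid_top :: "'v set \<Rightarrow> 'e set \<Rightarrow> ('e \<Rightarrow> 'v) \<Rightarrow> ('e \<Rightarrow> 'v)
                             \<Rightarrow> ((nat \<Rightarrow> 'e) \<times> int \<times> (nat \<Rightarrow> 'e)) topology" where
  "groupoid_top E0 E1 r s = topology_generated_by
     {Zset E1 r s mu nu u | mu nu u. fin_path E0 E1 r s u mu \<and> fin_path E0 E1 r s u nu}"

definition groupoid_automorphism :: "('a \<times> int \<times> 'a) set \<Rightarrow> (('a \<times> int \<times> 'a) \<Rightarrow> ('a \<times> int \<times> 'a)) \<Rightarrow> bool" where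
  "groupoid_automorphism G f \<longleftrightarrow> bij_betw f G G \<and>
     (\<forall>g\<in>G. \<forall>h\<in>G. gsource g = grange h \<longrightarrow> f (gmult g h) = gmult (f g) (f h)) \<and>
     (\<forall>g\<in>G. f (ginv g) = ginv (f g))"

definition bisection :: "('a \<times> int \<times> 'a) set \<Rightarrow> ('a \<times> int \<times> 'a) set \<Rightarrow> bool" where
  "bisection G B \<longleftrightarrow> B \<subseteq> G \<and> inj_on grange B \<and> inj_on gsource B"

definition gorbit :: "('a \<times> int \<times> 'a) set \<Rightarrow> ('a \<times> int \<times> 'a) \<Rightarrow> ('a \<times> int \<times> 'a) set" where
  "gorbit G u = {grange g | g. g \<in> G \<and> gsource g = u}"

definition gpow :: "('a \<times> int \<times> 'a) set \<Rightarrow> (('a \<times> int \<times> 'a) \<Rightarrow> ('a \<times> int \<times> 'a)) \<Rightarrow> int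
                    \<Rightarrow> ('a \<times> int \<times> 'a) \<Rightarrow> ('a \<times> int \<times> 'a)" where
  "gpow G f l = (if 0 \<le> l then f ^^ nat l else inv_into G f ^^ nat (- l))"

text \<open>The graph automorphism alpha of E: fixes vertices, sends (vw)_i to (vw)_{(i+1) mod k_vw},
  where lab e = i is the label of edge e = (vw)_i.\<close>
definition rot_edge :: "'e set \<Rightarrow> ('e \<Rightarrow> 'v) \<Rightarrow> ('e \<Rightarrow> 'v) \<Rightarrow> ('e \<Rightarrow> nat) \<Rightarrow> 'e \<Rightarrow> 'e" where
  "rot_edge E1 r s lab e = (THE e'. e' \<in> edges_between E1 r s (r e) (s e) \<and>
                              lab e' = (lab e + 1) mod kk E1 r s (r e) (s e))"

definition alpha_G :: "'e set \<Rightarrow> ('e \<Rightarrow> 'v) \<Rightarrow> ('e \<Rightarrow> 'v) \<Rightarrow> ('e \<Rightarrow> nat)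
                       \<Rightarrow> ((nat \<Rightarrow> 'e) \<times> int \<times> (nat \<Rightarrow> 'e)) \<Rightarrow> ((nat \<Rightarrow> 'e) \<times> int \<times> (nat \<Rightarrow> 'e))" where
  "alpha_G E1 r s lab g =
     (rot_edge E1 r s lab \<circ> fst g, fst (snd g), rot_edge E1 r s lab \<circ> snd (snd g))"

end

theory Submission
  imports Defs
begin



locale brat =
  fixes V :: "nat \<Rightarrow> 'v set" and E1 :: "'e set" and r s :: "'e \<Rightarrow> 'v"
    and lab :: "'e \<Rightarrow> nat"
  assumes bd: "bratteli_diagram V E1 r s"
    and big: "\<And>n v w. v \<in> V n \<Longrightarrow> w \<in> V (Suc n) \<Longrightarrow> kk E1 r s v w > n"
    and labelling: "\<And>n v w. v \<in> V n \<Longrightarrow> w \<in> V (Suc n) \<Longrightarrow>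
                       bij_betw lab (edges_between E1 r s v w) {..<kk E1 r s v w}"
begin

abbreviation "\<rho> \<equiv> rot_edge E1 r s lab"
abbreviation "K e \<equiv> kk E1 r s (r e) (s e)"
abbreviation "EB e \<equiv> edges_between E1 r s (r e) (s e)"

lemma edge_level: "e \<in> E1 \<Longrightarrow> \<exists>n. r e \<in> V n \<and> s e \<in> V (Suc n)"
  using bd unfolding bratteli_diagram_def by blast

lemma level_unique: "v \<in> V m \<Longrightarrow> v \<in> V n \<Longrightarrow> m = n"
  using bd unfolding bratteli_diagram_def by blast

lemma edge_bij: "e \<in> E1 \<Longrightarrow> bij_betw lab (EB e) {..<K e}"
  using edge_level labelling by blast

lemma K_pos: assumes "e \<in> E1" shows "K e > 0"
proof -
  obtain n where "r e \<in> V n" "s e \<in> V (Suc n)" using edge_level[OF assms] by blast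
  then have "K e > n" by (rule big)
  then show ?thesis by simp
qed

lemma in_EB: "e \<in> E1 \<Longrightarrow> e \<in> EB e"
  by (simp add: edges_between_def)

lemma EB_eq: "e' \<in> EB e \<Longrightarrow> e' \<in> E1 \<and> r e' = r e \<and> s e' = s e"
  by (simp add: edges_between_def)

lemma rho_props: assumes "e \<in> E1"
  shows "\<rho> e \<in> EB e \<and> lab (\<rho> e) = (lab e + 1) mod K e"
proof -
  have b: "bij_betw lab (EB e) {..<K e}" using edge_bij assms .
  have "(lab e + 1) mod K e \<in> {..<K e}" using K_pos[OF assms] by simp
  then obtain e' where e': "e' \<in> EB e" "lab e' = (lab e + 1) mod K e"
    using b by (metis bij_betw_def imageE)
  have "\<exists>!e'. e' \<in> EB e \<and> lab e' = (lab e + 1) mod K e"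
    using e' b by (metis bij_betw_def inj_on_def)
  then show ?thesis unfolding rot_edge_def by (rule theI')
qed

lemma rho_E1: "e \<in> E1 \<Longrightarrow> \<rho> e \<in> E1 \<and> r (\<rho> e) = r e \<and> s (\<rho> e) = s e"
  using rho_props EB_eq by blast

lemma rhopow_E1: "e \<in> E1 \<Longrightarrow> (\<rho>^^j) e \<in> E1 \<and> r ((\<rho>^^j) e) = r e \<and> s ((\<rho>^^j) e) = s e"
  by (induction j) (auto simp: rho_E1)

lemma rhopow_lab: "e \<in> E1 \<Longrightarrow> lab ((\<rho>^^j) e) = (lab e + j) mod K e"
proof (induction j)
  case 0
  have "lab e < K e" using edge_bij[OF 0] in_EB[OF 0] by (auto simp: bij_betw_def)
  then show ?case by simp
next
  case (Suc j)
  have "lab ((\<rho>^^Suc j) e) = (lab ((\<rho>^^j) e) + 1) mod K ((\<rho>^^j) e)"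
    using rho_props[of "(\<rho>^^j) e"] rhopow_E1[OF Suc.prems] by simp
  also have "\<dots> = ((lab e + j) mod K e + 1) mod K e"
    using Suc rhopow_E1[OF Suc.prems, of j] by simp
  also have "\<dots> = (lab e + Suc j) mod K e" using mod_add_left_eq[of "lab e + j" "K e" 1] by simp
  finally show ?case .
qed

lemma lab_inj: "e \<in> E1 \<Longrightarrow> e' \<in> E1 \<Longrightarrow> r e' = r e \<Longrightarrow> s e' = s e \<Longrightarrow> lab e' = lab e \<Longrightarrow> e' = e"
  using edge_bij[of e] unfolding bij_betw_def inj_on_def edges_between_def by auto

lemma rhopow_dvd: assumes "e \<in> E1" "K e dvd j" shows "(\<rho>^^j) e = e"
proof -
  have "lab e < K e" using edge_bij[OF assms(1)] in_EB[OF assms(1)] by (auto simp: bij_betw_def)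
  obtain c where c: "j = K e * c" using assms(2) by (auto simp: dvd_def)
  have "lab ((\<rho>^^j) e) = (lab e + K e * c) mod K e" using rhopow_lab[OF assms(1)] c by simp
  also have "\<dots> = lab e" using \<open>lab e < K e\<close> by simp
  finally have "lab ((\<rho>^^j) e) = lab e" .
  moreover have "(\<rho>^^j) e \<in> E1" "r ((\<rho>^^j) e) = r e" "s ((\<rho>^^j) e) = s e"
    using rhopow_E1[OF assms(1)] by auto
  ultimately show ?thesis using lab_inj[OF assms(1)] by simp
qed

lemma rhopow_K: "e \<in> E1 \<Longrightarrow> (\<rho>^^K e) e = e"
  by (rule rhopow_dvd[OF _ dvd_refl])

lemma rhopow_small: assumes "e \<in> E1" "0 < j" "j < K e" shows "(\<rho>^^j) e \<noteq> e"
proof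
  assume h: "(\<rho>^^j) e = e"
  have lt: "lab e < K e" using edge_bij[OF assms(1)] in_EB[OF assms(1)] by (auto simp: bij_betw_def)
  have "(lab e + j) mod K e = lab e" using rhopow_lab[OF assms(1), of j] h by simp
  moreover have "(lab e + j) mod K e \<noteq> lab e"
  proof (cases "lab e + j < K e")
    case True then show ?thesis using assms by simp
  next
    case False
    then have "(lab e + j) mod K e = (lab e + j - K e) mod K e"
      by (intro le_mod_geq) simp
    also have "\<dots> = lab e + j - K e" using lt assms by (intro mod_less) simp
    finally have "(lab e + j) mod K e = lab e + j - K e" .
    then show ?thesis using assms False by simp
  qed
  ultimately show False by simp
qed

definition ri :: "'e \<Rightarrow> 'e" where "ri e = (\<rho>^^(K e - 1)) e"

lemma ri_E1: "e \<in> E1 \<Longrightarrow> ri e \<in> E1 \<and> r (ri e) = r e \<and> s (ri e) = s e"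
  unfolding ri_def using rhopow_E1 by blast

lemma ri_rho: assumes "e \<in> E1" shows "ri (\<rho> e) = e"
proof -
  have "ri (\<rho> e) = (\<rho>^^(K e - 1)) (\<rho> e)" unfolding ri_def using rho_E1[OF assms] by simp
  also have "\<dots> = (\<rho>^^(Suc (K e - 1))) e" by (simp add: funpow_Suc_right del: funpow.simps)
  also have "\<dots> = e" using K_pos[OF assms] rhopow_K[OF assms] by simp
  finally show ?thesis .
qed

lemma rho_ri: assumes "e \<in> E1" shows "\<rho> (ri e) = e"
proof -
  have "\<rho> (ri e) = (\<rho>^^(Suc (K e - 1))) e" unfolding ri_def by simp
  also have "\<dots> = e" using K_pos[OF assms] rhopow_K[OF assms] by simp
  finally show ?thesis .
qed

lemma ripow_E1: "e \<in> E1 \<Longrightarrow> (ri^^j) e \<in> E1 \<and> r ((ri^^j) e) = r e \<and> s ((ri^^j) e) = s e"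
  by (induction j) (auto simp: ri_E1)

lemma rho_ri_pow: "e \<in> E1 \<Longrightarrow> (\<rho>^^j) ((ri^^j) e) = e"
proof (induction j)
  case (Suc j)
  have a: "\<And>x. (\<rho>^^Suc j) x = (\<rho>^^j) (\<rho> x)" by (simp only: funpow_Suc_right o_apply)
  have b: "(ri^^Suc j) e = ri ((ri^^j) e)" by (simp only: funpow.simps o_apply)
  have "(\<rho>^^Suc j) ((ri^^Suc j) e) = (\<rho>^^j) (\<rho> (ri ((ri^^j) e)))"
    by (simp only: a b)
  also have "\<dots> = e" using rho_ri ripow_E1 Suc by simp
  finally show ?case .
qed simp

lemma ri_rho_pow: "e \<in> E1 \<Longrightarrow> (ri^^j) ((\<rho>^^j) e) = e"
proof (induction j)
  case (Suc j)
  have a: "\<And>x. (ri^^Suc j) x = (ri^^j) (ri x)" by (simp only: funpow_Suc_right o_apply)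
  have b: "(\<rho>^^Suc j) e = \<rho> ((\<rho>^^j) e)" by (simp only: funpow.simps o_apply)
  have "(ri^^Suc j) ((\<rho>^^Suc j) e) = (ri^^j) (ri (\<rho> ((\<rho>^^j) e)))"
    by (simp only: a b)
  also have "\<dots> = e" using ri_rho rhopow_E1 Suc by simp
  finally show ?case .
qed simp

lemma ripow_dvd: assumes "e \<in> E1" "K e dvd j" shows "(ri^^j) e = e"
  using ri_rho_pow[OF assms(1), of j] rhopow_dvd[OF assms] by simp

lemma ripow_small: assumes "e \<in> E1" "0 < j" "j < K e" shows "(ri^^j) e \<noteq> e"
proof
  assume h: "(ri^^j) e = e"
  have "(\<rho>^^j) e = e" using rho_ri_pow[OF assms(1), of j] h by simp
  then show False using rhopow_small[OF assms] by simp
qed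

end



definition em :: "('e \<Rightarrow> 'e) \<Rightarrow> ((nat \<Rightarrow> 'e) \<times> int \<times> (nat \<Rightarrow> 'e)) \<Rightarrow> ((nat \<Rightarrow> 'e) \<times> int \<times> (nat \<Rightarrow> 'e))" where
  "em f g = (f \<circ> fst g, fst (snd g), f \<circ> snd (snd g))"

lemma em_pow: "em f ^^ n = em (f ^^ n)"
  by (induction n) (auto simp: em_def fun_eq_iff)

lemma pcat_comp: "f \<circ> pcat mu z = pcat (map f mu) (f \<circ> z)"
  by (auto simp: pcat_def fun_eq_iff)

context brat begin

abbreviation "IP \<equiv> inf_paths E1 r s"
abbreviation "GG \<equiv> graph_groupoid E1 r s"
abbreviation "E0 \<equiv> (\<Union>n. V n)"

definition good :: "('e \<Rightarrow> 'e) \<Rightarrow> bool" where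
  "good f \<longleftrightarrow> (\<forall>e\<in>E1. f e \<in> E1 \<and> r (f e) = r e \<and> s (f e) = s e)"

lemma good_rho: "good \<rho>" and good_ri: "good ri"
  and good_rhopow: "good (\<rho>^^j)" and good_ripow: "good (ri^^j)"
  using rho_E1 ri_E1 rhopow_E1 ripow_E1 unfolding good_def by auto

lemma good_IP: "good f \<Longrightarrow> x \<in> IP \<Longrightarrow> f \<circ> x \<in> IP"
  unfolding good_def inf_paths_def by auto

lemma shift_comp: "shift m (f \<circ> x) = f \<circ> shift m x"
  by (simp add: shift_def fun_eq_iff)

lemma GG_iff: "g \<in> GG \<longleftrightarrow> (\<exists>m n. fst g \<in> IP \<and> snd (snd g) \<in> IP \<and> fst (snd g) = int m - int n \<and>
   shift m (fst g) = shift n (snd (snd g)))"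
  unfolding graph_groupoid_def by (cases g) auto

lemma good_GG: assumes "good f" "g \<in> GG" shows "em f g \<in> GG"
proof -
  from assms(2) obtain m n where "fst g \<in> IP" "snd (snd g) \<in> IP" "fst (snd g) = int m - int n"
    "shift m (fst g) = shift n (snd (snd g))" unfolding GG_iff by blast
  note h = this
  show ?thesis unfolding GG_iff
    apply (rule exI[of _ m], rule exI[of _ n])
    using h good_IP[OF assms(1)] by (simp add: em_def shift_comp)
qed

lemma inv_pair_IP: "good f \<Longrightarrow> good h \<Longrightarrow> (\<forall>e\<in>E1. h (f e) = e) \<Longrightarrow> x \<in> IP \<Longrightarrow> h \<circ> (f \<circ> x) = x"
  unfolding inf_paths_def by (auto simp: fun_eq_iff)

lemma em_inv: assumes "good f" "good h" "\<forall>e\<in>E1. h (f e) = e" "g \<in> GG"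
  shows "em h (em f g) = g"
proof -
  from assms(4) have "fst g \<in> IP" "snd (snd g) \<in> IP" unfolding GG_iff by auto
  then show ?thesis using inv_pair_IP[OF assms(1-3)] by (cases g) (simp add: em_def)
qed

lemma ri_rho_all: "\<forall>e\<in>E1. ri (\<rho> e) = e" and rho_ri_all: "\<forall>e\<in>E1. \<rho> (ri e) = e"
  using ri_rho rho_ri by auto

lemma bij_alpha: "bij_betw (em \<rho>) GG GG"
proof (rule bij_betw_byWitness[where f'="em ri"])
  show "\<forall>a\<in>GG. em ri (em \<rho> a) = a" using em_inv[OF good_rho good_ri ri_rho_all] by blast
  show "\<forall>a\<in>GG. em \<rho> (em ri a) = a" using em_inv[OF good_ri good_rho rho_ri_all] by blast
  show "em \<rho> ` GG \<subseteq> GG" using good_GG[OF good_rho] by blast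
  show "em ri ` GG \<subseteq> GG" using good_GG[OF good_ri] by blast
qed

lemma alpha_eq: "alpha_G E1 r s lab = em \<rho>"
  by (simp add: alpha_G_def em_def fun_eq_iff)

lemma inv_alpha: "g \<in> GG \<Longrightarrow> inv_into GG (em \<rho>) g = em ri g"
proof (rule inv_into_f_eq)
  show "inj_on (em \<rho>) GG" using bij_alpha by (simp add: bij_betw_def)
  assume "g \<in> GG"
  then show "em ri g \<in> GG" using good_GG[OF good_ri] by blast
  show "em \<rho> (em ri g) = g" using em_inv[OF good_ri good_rho rho_ri_all] \<open>g \<in> GG\<close> by blast
qed

lemma inv_alpha_pow: "g \<in> GG \<Longrightarrow> (inv_into GG (em \<rho>) ^^ n) g = em (ri^^n) g"
proof (induction n)
  case 0 then show ?case by (cases g) (simp add: em_def comp_def)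
next
  case (Suc n)
  have "(inv_into GG (em \<rho>) ^^ Suc n) g = inv_into GG (em \<rho>) (em (ri^^n) g)"
    using Suc by simp
  also have "\<dots> = em ri (em (ri^^n) g)" by (rule inv_alpha[OF good_GG[OF good_ripow Suc.prems]])
  also have "\<dots> = em (ri^^Suc n) g" by (simp add: em_def comp_assoc)
  finally show ?case .
qed

definition RR :: "int \<Rightarrow> 'e \<Rightarrow> 'e" where
  "RR l = (if 0 \<le> l then \<rho>^^nat l else ri^^nat (-l))"

lemma good_RR: "good (RR l)"
  unfolding RR_def using good_rhopow good_ripow by auto

lemma gpow_eq: "g \<in> GG \<Longrightarrow> gpow GG (em \<rho>) l g = em (RR l) g"
  unfolding gpow_def RR_def using inv_alpha_pow by (auto simp: em_pow)

lemma auto_alpha: "groupoid_automorphism GG (em \<rho>)"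
  unfolding groupoid_automorphism_def
proof (intro conjI ballI impI)
  show "bij_betw (em \<rho>) GG GG" by (rule bij_alpha)
  fix g h show "em \<rho> (gmult g h) = gmult (em \<rho> g) (em \<rho> h)" by (simp add: em_def gmult_def)
next
  fix g show "em \<rho> (ginv g) = ginv (em \<rho> g)" by (simp add: em_def ginv_def)
qed

end



lemma shift_pcat: "shift (length mu) (pcat mu z) = z"
  by (simp add: shift_def pcat_def fun_eq_iff)

context brat begin

abbreviation "FP \<equiv> fin_path E0 E1 r s"
abbreviation "SS \<equiv> {Zset E1 r s mu nu u | mu nu u. FP u mu \<and> FP u nu}"
abbreviation "TT \<equiv> topology_generated_by SS"

definition cyl :: "'e list \<Rightarrow> 'v \<Rightarrow> ((nat \<Rightarrow> 'e) \<times> int \<times> (nat \<Rightarrow> 'e)) set" where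
  "cyl nu w = {(p,0,p) | p. p \<in> IP \<and> (\<forall>i<length nu. p i = nu!i) \<and> r (p (length nu)) = w}"

lemma TT_eq: "groupoid_top E0 E1 r s = TT"
  by (simp add: groupoid_top_def)

lemma E1_E0: "e \<in> E1 \<Longrightarrow> r e \<in> E0 \<and> s e \<in> E0"
  using edge_level by blast

lemma pcat_IP: assumes "FP u mu" "z \<in> IP" "r (z 0) = u" shows "pcat mu z \<in> IP"
proof -
  have fp: "set mu \<subseteq> E1" "\<forall>i. Suc i < length mu \<longrightarrow> s (mu ! i) = r (mu ! Suc i)"
    "mu \<noteq> [] \<longrightarrow> s (last mu) = u" using assms(1) unfolding fin_path_def by auto
  have z: "\<forall>i. z i \<in> E1" "\<forall>i. s (z i) = r (z (Suc i))" using assms(2) unfolding inf_paths_def by auto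
  have "pcat mu z i \<in> E1" for i
    using fp(1) z(1) by (auto simp: pcat_def)
  moreover have "s (pcat mu z i) = r (pcat mu z (Suc i))" for i
  proof (cases "Suc i < length mu")
    case True then show ?thesis using fp(2) by (simp add: pcat_def)
  next
    case False
    show ?thesis
    proof (cases "Suc i = length mu")
      case True
      then have "mu \<noteq> []" by auto
      then have "last mu = mu ! i" using True by (simp add: last_conv_nth flip: True)
      then show ?thesis using True fp(3) assms(3) \<open>mu \<noteq> []\<close> by (simp add: pcat_def)
    next
      case False': False
      then have "i \<ge> length mu" using False by simp
      then show ?thesis using z(2) by (simp add: pcat_def Suc_diff_le)
    qed
  qed
  ultimately show ?thesis unfolding inf_paths_def by simp
qed

lemma shift_IP: "x \<in> IP \<Longrightarrow> shift m x \<in> IP"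
  unfolding inf_paths_def shift_def by auto

lemma Zset_sub: assumes "FP u mu" "FP u nu" shows "Zset E1 r s mu nu u \<subseteq> GG"
proof
  fix g assume "g \<in> Zset E1 r s mu nu u"
  then obtain z where g: "g = (pcat mu z, int (length mu) - int (length nu), pcat nu z)"
    "z \<in> IP" "r (z 0) = u" unfolding Zset_def by blast
  show "g \<in> GG" unfolding GG_iff g(1)
    apply (rule exI[of _ "length mu"], rule exI[of _ "length nu"])
    using pcat_IP[OF assms(1) g(2,3)] pcat_IP[OF assms(2) g(2,3)] by (simp add: shift_pcat)
qed

lemma fin_path_map: assumes "p \<in> IP" shows "FP (r (p n)) (map p [0..<n])"
proof -
  have "\<forall>i. p i \<in> E1" "\<forall>i. s (p i) = r (p (Suc i))" using assms unfolding inf_paths_def by auto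
  then show ?thesis unfolding fin_path_def using E1_E0
    by (auto simp: last_map)
qed

lemma topspace_TT: "topspace TT = GG"
proof
  show "topspace TT \<subseteq> GG" using Zset_sub by auto
  show "GG \<subseteq> topspace TT"
  proof
    fix g assume "g \<in> GG"
    obtain x k y where g: "g = (x,k,y)" by (cases g)
    obtain m n where h: "x \<in> IP" "y \<in> IP" "k = int m - int n"
      "shift m x = shift n y" using \<open>g \<in> GG\<close> unfolding GG_iff g by auto
    have xy: "x (i + m) = y (i + n)" for i using fun_cong[OF h(4), of i] unfolding shift_def by simp
    have f1: "FP (r (x m)) (map x [0..<m])" using fin_path_map h(1) by blast
    have f2: "FP (r (x m)) (map y [0..<n])" using fin_path_map[OF h(2), of n] xy[of 0] by simp
    have p1: "pcat (map x [0..<m]) (shift m x) = x" by (auto simp: pcat_def shift_def fun_eq_iff)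
    have p2: "pcat (map y [0..<n]) (shift m x) = y"
    proof
      fix i show "pcat (map y [0..<n]) (shift m x) i = y i"
        using xy[of "i - n"] by (auto simp: pcat_def shift_def)
    qed
    have "g \<in> Zset E1 r s (map x [0..<m]) (map y [0..<n]) (r (x m))"
      unfolding Zset_def g
      apply (rule CollectI, rule exI[of _ "shift m x"])
      using shift_IP[OF h(1)] p1 p2 h(3) by (simp add: shift_def)
    then show "g \<in> topspace TT" using f1 f2 by auto
  qed
qed

lemma Zset_cyl: assumes "FP u mu" shows "Zset E1 r s mu mu u = cyl mu u"
proof
  show "Zset E1 r s mu mu u \<subseteq> cyl mu u"
  proof
    fix g assume "g \<in> Zset E1 r s mu mu u"
    then obtain z where g: "g = (pcat mu z, 0, pcat mu z)" "z \<in> IP" "r (z 0) = u"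
      unfolding Zset_def by auto
    show "g \<in> cyl mu u" unfolding cyl_def g(1)
      using pcat_IP[OF assms g(2,3)] g(3) by (auto simp: pcat_def)
  qed
  show "cyl mu u \<subseteq> Zset E1 r s mu mu u"
  proof
    fix g assume "g \<in> cyl mu u"
    then obtain p where g: "g = (p,0,p)" "p \<in> IP" "\<forall>i<length mu. p i = mu!i" "r (p (length mu)) = u"
      unfolding cyl_def by auto
    have "pcat mu (shift (length mu) p) = p" using g(3) by (auto simp: pcat_def shift_def fun_eq_iff)
    then show "g \<in> Zset E1 r s mu mu u" unfolding Zset_def g(1)
      using shift_IP[OF g(2)] g(4) by (auto simp: shift_def intro!: exI[of _ "shift (length mu) p"])
  qed
qed

lemma Zset_unit: assumes "(p, 0, p) \<in> Zset E1 r s mu nu u" shows "mu = nu"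
proof -
  obtain z where "(p,0,p) = (pcat mu z, int (length mu) - int (length nu), pcat nu z)"
    using assms unfolding Zset_def by blast
  then have z: "p = pcat mu z" "0 = int (length mu) - int (length nu)" "p = pcat nu z" by auto
  have l: "length mu = length nu" using z(2) by simp
  show ?thesis
  proof (rule nth_equalityI)
    show "length mu = length nu" by (rule l)
    fix i assume "i < length mu"
    then show "mu ! i = nu ! i" using fun_cong[OF z(1)[symmetric, unfolded z(3)], of i] l
      by (simp add: pcat_def)
  qed
qed

lemma cyl_self: "p \<in> IP \<Longrightarrow> (p,0,p) \<in> cyl (map p [0..<n]) (r (p n))"
  unfolding cyl_def by auto

lemma cyl_mono: assumes "n \<le> N" shows "cyl (map p [0..<N]) (r (p N)) \<subseteq> cyl (map p [0..<n]) (r (p n))"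
proof
  fix g assume "g \<in> cyl (map p [0..<N]) (r (p N))"
  then obtain q where q: "g = (q,0,q)" "q \<in> IP" "\<forall>i<N. q i = p i" "r (q N) = r (p N)"
    unfolding cyl_def by auto
  have "r (q n) = r (p n)" using q(3,4) assms by (cases "n = N") auto
  then show "g \<in> cyl (map p [0..<n]) (r (p n))" unfolding cyl_def using q assms by auto
qed

lemma cyl_sub_G0: "cyl nu w \<subseteq> gunits E1 r s"
  unfolding cyl_def gunits_def by auto

lemma nbhd: assumes "generate_topology_on SS Ob" "p \<in> IP" "(p,0,p) \<in> Ob"
  shows "\<exists>n. cyl (map p [0..<n]) (r (p n)) \<subseteq> Ob"
  using assms
proof (induction rule: generate_topology_on.induct)
  case Empty then show ?case by simp
next
  case (Int a b)
  then obtain n1 n2 where "cyl (map p [0..<n1]) (r (p n1)) \<subseteq> a" "cyl (map p [0..<n2]) (r (p n2)) \<subseteq> b"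
    by auto
  then show ?case using cyl_mono[of n1 "max n1 n2" p] cyl_mono[of n2 "max n1 n2" p]
    by (intro exI[of _ "max n1 n2"]) auto
next
  case (UN K)
  then obtain k where "k \<in> K" "(p,0,p) \<in> k" by auto
  then show ?case using UN by blast
next
  case (Basis s')
  then obtain mu nu u where b: "s' = Zset E1 r s mu nu u" "FP u mu" "FP u nu" by auto
  have "mu = nu" using Zset_unit Basis b by blast
  then have s': "s' = cyl mu u" using b Zset_cyl by simp
  then have "\<forall>i<length mu. p i = mu!i" "r (p (length mu)) = u" using Basis unfolding cyl_def by auto
  then have "map p [0..<length mu] = mu" "r (p (length mu)) = u" by (auto intro: nth_equalityI)
  then show ?case using s' by (intro exI[of _ "length mu"]) simp
qed

end



context brat begin

lemma FP_map: assumes "good h" "FP u mu" shows "FP u (map h mu)"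
proof -
  have fp: "u \<in> E0" "set mu \<subseteq> E1" "\<forall>i. Suc i < length mu \<longrightarrow> s (mu ! i) = r (mu ! Suc i)"
    "mu \<noteq> [] \<longrightarrow> s (last mu) = u" using assms(2) unfolding fin_path_def by auto
  have hh: "\<And>e. e \<in> E1 \<Longrightarrow> h e \<in> E1 \<and> r (h e) = r e \<and> s (h e) = s e"
    using assms(1) unfolding good_def by blast
  have "set (map h mu) \<subseteq> E1" using fp(2) hh by auto
  moreover have "\<forall>i. Suc i < length (map h mu) \<longrightarrow> s (map h mu ! i) = r (map h mu ! Suc i)"
  proof (intro allI impI)
    fix i assume i: "Suc i < length (map h mu)"
    then have "mu ! i \<in> E1" "mu ! Suc i \<in> E1" using fp(2) by (auto dest: nth_mem)
    then show "s (map h mu ! i) = r (map h mu ! Suc i)" using i fp(3) hh by simp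
  qed
  moreover have "map h mu \<noteq> [] \<longrightarrow> s (last (map h mu)) = u"
  proof
    assume "map h mu \<noteq> []"
    then have "mu \<noteq> []" by simp
    then have "last mu \<in> E1" using fp(2) by auto
    then show "s (last (map h mu)) = u" using \<open>mu \<noteq> []\<close> fp(4) hh by (simp add: last_map)
  qed
  ultimately show ?thesis using fp(1) unfolding fin_path_def by blast
qed

lemma em_preimage:
  assumes f: "good f" and h: "good h" and hf: "\<forall>e\<in>E1. h (f e) = e" and fh: "\<forall>e\<in>E1. f (h e) = e"
    and mu: "FP u mu" and nu: "FP u nu"
  shows "em f -` Zset E1 r s mu nu u \<inter> GG = Zset E1 r s (map h mu) (map h nu) u"
proof
  show "em f -` Zset E1 r s mu nu u \<inter> GG \<subseteq> Zset E1 r s (map h mu) (map h nu) u"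
  proof
    fix g assume g: "g \<in> em f -` Zset E1 r s mu nu u \<inter> GG"
    obtain a k b where gg: "g = (a,k,b)" by (cases g)
    have "(a,k,b) \<in> GG" using g gg by blast
    then have ab: "a \<in> IP" "b \<in> IP" unfolding GG_iff by auto
    obtain z where z: "(f \<circ> a, k, f \<circ> b) = (pcat mu z, int (length mu) - int (length nu), pcat nu z)"
      "z \<in> IP" "r (z 0) = u"
      using g unfolding gg Zset_def em_def by auto
    have "a = h \<circ> (f \<circ> a)" "b = h \<circ> (f \<circ> b)"
      using inv_pair_IP[OF f h hf] ab by auto
    then have "a = pcat (map h mu) (h \<circ> z)" "b = pcat (map h nu) (h \<circ> z)"
      using z(1) by (auto simp: pcat_comp)
    moreover have "h \<circ> z \<in> IP" "r ((h \<circ> z) 0) = u"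
      using good_IP[OF h z(2)] z(2,3) h unfolding good_def inf_paths_def by auto
    ultimately show "g \<in> Zset E1 r s (map h mu) (map h nu) u"
      unfolding Zset_def gg using z(1) by auto
  qed
  show "Zset E1 r s (map h mu) (map h nu) u \<subseteq> em f -` Zset E1 r s mu nu u \<inter> GG"
  proof
    fix g assume g: "g \<in> Zset E1 r s (map h mu) (map h nu) u"
    have "g \<in> GG" using Zset_sub[OF FP_map[OF h mu] FP_map[OF h nu]] g by blast
    obtain z where z: "g = (pcat (map h mu) z, int (length mu) - int (length nu), pcat (map h nu) z)"
      "z \<in> IP" "r (z 0) = u"
      using g unfolding Zset_def by auto
    have mm: "map f (map h mu) = mu" "map f (map h nu) = nu"
      using mu nu fh unfolding fin_path_def by (auto simp: map_idI subset_iff)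
    have "em f g = (pcat mu (f \<circ> z), int (length mu) - int (length nu), pcat nu (f \<circ> z))"
      unfolding z(1) em_def using mm by (simp add: pcat_comp)
    moreover have "f \<circ> z \<in> IP" "r ((f \<circ> z) 0) = u"
      using good_IP[OF f z(2)] z(2,3) f unfolding good_def inf_paths_def by auto
    ultimately show "g \<in> em f -` Zset E1 r s mu nu u \<inter> GG"
      using \<open>g \<in> GG\<close> unfolding Zset_def by auto
  qed
qed

end



context brat begin

lemma cont_em:
  assumes f: "good f" and h: "good h" and hf: "\<forall>e\<in>E1. h (f e) = e" and fh: "\<forall>e\<in>E1. f (h e) = e"
  shows "continuous_map TT TT (em f)"
proof (rule continuous_on_generated_topo)
  fix U assume "U \<in> SS"
  then obtain mu nu u where U: "U = Zset E1 r s mu nu u" "FP u mu" "FP u nu" by blast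
  have "em f -` U \<inter> topspace TT = Zset E1 r s (map h mu) (map h nu) u"
    unfolding topspace_TT U(1) by (rule em_preimage[OF f h hf fh U(2,3)])
  moreover have "Zset E1 r s (map h mu) (map h nu) u \<in> SS"
    using FP_map[OF h U(2)] FP_map[OF h U(3)] by blast
  ultimately show "openin TT (em f -` U \<inter> topspace TT)"
    by (simp add: topology_generated_by_Basis)
next
  show "em f ` topspace TT \<subseteq> \<Union> SS"
  proof -
    have "\<Union>SS = GG" using topspace_TT by simp
    then show ?thesis using good_GG[OF f] topspace_TT by auto
  qed
qed

lemma homeo: "homeomorphic_map TT TT (em \<rho>)"
  unfolding homeomorphic_map_maps homeomorphic_maps_def
proof (rule exI[of _ "em ri"], intro conjI ballI)
  show "continuous_map TT TT (em \<rho>)" by (rule cont_em[OF good_rho good_ri ri_rho_all rho_ri_all])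
  show "continuous_map TT TT (em ri)" by (rule cont_em[OF good_ri good_rho rho_ri_all ri_rho_all])
  fix x assume "x \<in> topspace TT"
  then have "x \<in> GG" by (simp only: topspace_TT)
  then show "em ri (em \<rho> x) = x" "em \<rho> (em ri x) = x"
    using em_inv[OF good_rho good_ri ri_rho_all] em_inv[OF good_ri good_rho rho_ri_all] by auto
qed

end



context brat begin

lemma levels: assumes "p \<in> IP" "r (p 0) \<in> V c" shows "r (p i) \<in> V (c + i)"
proof (induction i)
  case 0 then show ?case using assms by simp
next
  case (Suc i)
  have e: "p i \<in> E1" "s (p i) = r (p (Suc i))" using assms(1) unfolding inf_paths_def by auto
  obtain a where a: "r (p i) \<in> V a" "s (p i) \<in> V (Suc a)" using edge_level[OF e(1)] by blast
  have "a = c + i" using level_unique[OF a(1) Suc] .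
  then show ?case using a(2) e(2) by simp
qed

lemma wandering:
  assumes x: "x \<in> gunits E1 r s" and eq: "gorbit GG x = gorbit GG (gpow GG (em \<rho>) l x)"
  shows "l = 0"
proof -
  obtain p where xp: "x = (p,0,p)" "p \<in> IP" using x unfolding gunits_def by auto
  have xG: "x \<in> GG" unfolding GG_iff xp using xp(2) by auto
  define q where "q = RR l \<circ> p"
  have y: "gpow GG (em \<rho>) l x = (q,0,q)" using gpow_eq[OF xG] unfolding xp q_def em_def by simp
  have "x \<in> gorbit GG x" unfolding gorbit_def
  proof (rule CollectI, rule exI[of _ x])
    show "x = grange x \<and> x \<in> GG \<and> gsource x = x" using xG xp(1) by (simp add: grange_def gsource_def)
  qed
  then have "x \<in> gorbit GG (gpow GG (em \<rho>) l x)" using eq by blast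
  then have "x \<in> gorbit GG (q,0,q)" unfolding y .

  then obtain g where g: "g \<in> GG" "gsource g = (q,0,q)" "grange g = x" unfolding gorbit_def by blast
  obtain a k b where gg: "g = (a,k,b)" by (cases g)
  have ab: "a = p" "b = q" using g(2,3) xp unfolding gg gsource_def grange_def by auto
  obtain m n where sh: "shift m p = shift n q" using g(1) unfolding gg GG_iff ab by auto
  have pq: "p (i + m) = q (i + n)" for i using fun_cong[OF sh, of i] unfolding shift_def by simp
  have pE: "p i \<in> E1" for i using xp(2) unfolding inf_paths_def by auto
  have rq: "r (q i) = r (p i)" for i using good_RR[of l] pE[of i] unfolding q_def good_def by auto
  obtain c where c: "r (p 0) \<in> V c" using edge_level[OF pE[of 0]] by blast
  have "r (p m) = r (p n)" using pq[of 0] rq[of n] by simp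
  then have "r (p m) \<in> V (c + n)" using levels[OF xp(2) c, of n] by simp
  then have "c + m = c + n" using level_unique[OF levels[OF xp(2) c, of m]] by blast
  then have mn: "m = n" by simp
  define j where "j = nat \<bar>l\<bar> + m"
  have "q j = p j" using pq[of "nat \<bar>l\<bar>"] mn unfolding j_def by simp
  then have fix_e: "RR l (p j) = p j" by (simp add: q_def)
  obtain a' where a': "r (p j) \<in> V a'" "s (p j) \<in> V (Suc a')" using edge_level[OF pE[of j]] by blast
  have "a' = c + j" using level_unique[OF a'(1) levels[OF xp(2) c, of j]] .
  moreover have "K (p j) > a'" using big[OF a'] .
  ultimately have Kbig: "K (p j) > nat \<bar>l\<bar>" unfolding j_def by simp
  show "l = 0"
  proof (rule ccontr)
    assume "l \<noteq> 0"
    show False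
    proof (cases "l > 0")
      case True
      then have "(\<rho>^^nat l) (p j) = p j" using fix_e unfolding RR_def by simp
      moreover have "0 < nat l" "nat l < K (p j)" using True Kbig by auto
      ultimately show False using rhopow_small[OF pE[of j]] by blast
    next
      case False
      then have "(ri^^nat (-l)) (p j) = p j" using fix_e \<open>l \<noteq> 0\<close> unfolding RR_def by simp
      moreover have "0 < nat (-l)" "nat (-l) < K (p j)" using False \<open>l \<noteq> 0\<close> Kbig by auto
      ultimately show False using ripow_small[OF pE[of j]] by blast
    qed
  qed
qed

end



context brat begin

lemma row_finite: "w \<in> E0 \<Longrightarrow> finite {e\<in>E1. r e = w}"
  using bd unfolding bratteli_diagram_def by blast

lemma cyl_split: "cyl nu w \<subseteq> (\<Union>e\<in>{e\<in>E1. r e = w}. cyl (nu @ [e]) (s e))"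
proof
  fix g assume "g \<in> cyl nu w"
  then obtain p where p: "g = (p,0,p)" "p \<in> IP" "\<forall>i<length nu. p i = nu!i" "r (p (length nu)) = w"
    unfolding cyl_def by auto
  define e where "e = p (length nu)"
  have e: "e \<in> E1" "s e = r (p (Suc (length nu)))" using p(2) unfolding e_def inf_paths_def by auto
  have "\<forall>i<length (nu @ [e]). p i = (nu @ [e]) ! i"
    using p(3) by (auto simp: nth_append e_def less_Suc_eq)
  then have "g \<in> cyl (nu @ [e]) (s e)" unfolding cyl_def using p e by auto
  then show "g \<in> (\<Union>e\<in>{e\<in>E1. r e = w}. cyl (nu @ [e]) (s e))" using e p(4) e_def by auto
qed

lemma cyl_GG: "FP u mu \<Longrightarrow> cyl mu u \<subseteq> GG"
  using Zset_cyl Zset_sub by blast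

lemma compact_cyl: assumes mu: "FP u mu" shows "compactin TT (cyl mu u)"
  unfolding compactin_def
proof (intro conjI allI impI)
  show "cyl mu u \<subseteq> topspace TT" using cyl_GG[OF mu] topspace_TT by simp
  fix \<U> assume H: "(\<forall>U\<in>\<U>. openin TT U) \<and> cyl mu u \<subseteq> \<Union>\<U>"
  show "\<exists>F. finite F \<and> F \<subseteq> \<U> \<and> cyl mu u \<subseteq> \<Union>F"
  proof (rule ccontr)
    define bad where "bad nu w \<longleftrightarrow> w \<in> E0 \<and> \<not>(\<exists>F. finite F \<and> F \<subseteq> \<U> \<and> cyl nu w \<subseteq> \<Union>F)" for nu w
    assume "\<not> (\<exists>F. finite F \<and> F \<subseteq> \<U> \<and> cyl mu u \<subseteq> \<Union>F)"
    moreover have "u \<in> E0" using mu unfolding fin_path_def by blast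
    ultimately have b0: "bad mu u" unfolding bad_def by blast
    have step: "\<exists>e. e \<in> E1 \<and> r e = w \<and> bad (nu @ [e]) (s e)" if bw: "bad nu w" for nu w
    proof (rule ccontr)
      assume nex: "\<not> (\<exists>e. e \<in> E1 \<and> r e = w \<and> bad (nu @ [e]) (s e))"
      let ?A = "{e\<in>E1. r e = w}"
      have fin: "finite ?A" using row_finite bw unfolding bad_def by blast
      have "\<forall>e\<in>?A. \<exists>F. finite F \<and> F \<subseteq> \<U> \<and> cyl (nu @ [e]) (s e) \<subseteq> \<Union>F"
        using nex E1_E0 unfolding bad_def by blast
      from bchoice[OF this] obtain Fe where Fe: "\<forall>e\<in>?A. finite (Fe e) \<and> Fe e \<subseteq> \<U> \<and> cyl (nu @ [e]) (s e) \<subseteq> \<Union>(Fe e)"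
        by blast
      have "finite (\<Union>(Fe ` ?A))" using fin Fe by auto
      moreover have "\<Union>(Fe ` ?A) \<subseteq> \<U>" using Fe by auto
      moreover have "cyl nu w \<subseteq> \<Union>(\<Union>(Fe ` ?A))"
      proof
        fix g assume "g \<in> cyl nu w"
        then obtain e where e: "e \<in> ?A" "g \<in> cyl (nu @ [e]) (s e)" using cyl_split[of nu w] by blast
        then obtain U where "U \<in> Fe e" "g \<in> U" using Fe by blast
        then show "g \<in> \<Union>(\<Union>(Fe ` ?A))" using e(1) by blast
      qed
      ultimately show False using bw unfolding bad_def by blast
    qed
    define nxt where "nxt x = (SOME e. e \<in> E1 \<and> r e = snd x \<and> bad (fst x @ [e]) (s e))" for x
    define f where "f = rec_nat (mu,u) (\<lambda>_ x. (fst x @ [nxt x], s (nxt x)))"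
    have f0: "f 0 = (mu,u)" by (simp add: f_def)
    have fS: "f (Suc n) = (fst (f n) @ [nxt (f n)], s (nxt (f n)))" for n by (simp add: f_def)
    have nx: "nxt x \<in> E1 \<and> r (nxt x) = snd x \<and> bad (fst x @ [nxt x]) (s (nxt x))"
      if "bad (fst x) (snd x)" for x
      unfolding nxt_def by (rule someI_ex) (use step that in auto)
    have badf: "bad (fst (f n)) (snd (f n))" for n
    proof (induction n)
      case 0 then show ?case using b0 f0 by simp
    next
      case (Suc n) then show ?case using nx[OF Suc] fS[of n] by simp
    qed
    have nxf: "nxt (f n) \<in> E1" "r (nxt (f n)) = snd (f n)" for n using nx[OF badf[of n]] by auto
    define p where "p i = (if i < length mu then mu!i else nxt (f (i - length mu)))" for i
    have fstf: "fst (f n) = map p [0..<length mu + n]" for n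
    proof (induction n)
      case 0 then show ?case using f0 by (auto simp: p_def intro: nth_equalityI)
    next
      case (Suc n) then show ?case using fS[of n] by (simp add: p_def)
    qed
    have sndf: "snd (f n) = r (p (length mu + n))" for n using nxf(2)[of n] by (simp add: p_def)
    have ne: "cyl (fst (f n)) (snd (f n)) \<noteq> {}" for n
    proof
      assume e: "cyl (fst (f n)) (snd (f n)) = {}"
      have "finite {} \<and> {} \<subseteq> \<U> \<and> cyl (fst (f n)) (snd (f n)) \<subseteq> \<Union>{}" using e by simp
      then show False using badf[of n] unfolding bad_def by blast
    qed
    have approx: "\<exists>q. q \<in> IP \<and> (\<forall>j<length mu + n. q j = p j)" for n
    proof -
      obtain g where "g \<in> cyl (fst (f n)) (snd (f n))" using ne by blast
      then show ?thesis unfolding cyl_def fstf by auto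
    qed
    have pIP: "p \<in> IP" unfolding inf_paths_def
    proof (intro CollectI conjI allI)
      fix i
      obtain q where q: "q \<in> IP" "\<forall>j<length mu + Suc (Suc i). q j = p j" using approx by blast
      have "q i \<in> E1" "s (q i) = r (q (Suc i))" using q(1) unfolding inf_paths_def by auto
      then show "p i \<in> E1" "s (p i) = r (p (Suc i))" using q(2) by auto
    qed
    have "(p,0,p) \<in> cyl mu u" unfolding cyl_def using pIP sndf[of 0] f0 by (auto simp: p_def)
    then obtain Ob where Ob: "Ob \<in> \<U>" "(p,0,p) \<in> Ob" using H by blast
    have "generate_topology_on SS Ob" using H Ob(1) openin_topology_generated_by by blast
    then obtain n0 where n0: "cyl (map p [0..<n0]) (r (p n0)) \<subseteq> Ob" using nbhd pIP Ob(2) by blast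
    have ceq: "cyl (fst (f n0)) (snd (f n0)) = cyl (map p [0..<length mu + n0]) (r (p (length mu + n0)))"
      using fstf sndf by simp
    have "cyl (fst (f n0)) (snd (f n0)) \<subseteq> Ob"
      unfolding ceq by (rule subset_trans[OF cyl_mono n0]) simp
    then have "\<exists>F. finite F \<and> F \<subseteq> \<U> \<and> cyl (fst (f n0)) (snd (f n0)) \<subseteq> \<Union>F"
      using Ob(1) by (intro exI[of _ "{Ob}"]) auto
    then show False using badf[of n0] unfolding bad_def by blast
  qed
qed

lemma shrink: assumes mu: "FP u mu"
  shows "\<exists>l::int. l \<ge> 1 \<and> gpow GG (em \<rho>) (- l) ` cyl mu u \<subseteq> cyl mu u"
proof -
  define L where "L = prod_list (map K mu)"
  have mE: "set mu \<subseteq> E1" using mu unfolding fin_path_def by blast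
  have "\<forall>e\<in>set mu. K e > 0" using K_pos mE by blast
  then have "0 \<notin> set (map K mu)" by auto
  then have "L \<noteq> 0" unfolding L_def by (simp add: prod_list_zero_iff)
  then have L1: "int L \<ge> 1" by simp
  have R: "RR (- int L) = ri^^L" using L1 unfolding RR_def by simp
  have "gpow GG (em \<rho>) (- int L) ` cyl mu u \<subseteq> cyl mu u"
  proof
    fix g' assume "g' \<in> gpow GG (em \<rho>) (- int L) ` cyl mu u"
    then obtain g where g: "g \<in> cyl mu u" "g' = gpow GG (em \<rho>) (- int L) g" by blast
    obtain p where p: "g = (p,0,p)" "p \<in> IP" "\<forall>i<length mu. p i = mu!i" "r (p (length mu)) = u"
      using g(1) unfolding cyl_def by auto
    have g': "g' = ((ri^^L) \<circ> p, 0, (ri^^L) \<circ> p)"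
      using g(2) gpow_eq[OF subsetD[OF cyl_GG[OF mu] g(1)]] R p(1) by (simp add: em_def)
    have fixmu: "(ri^^L) (p i) = p i" if "i < length mu" for i
    proof -
      have "mu ! i \<in> E1" using mE that by auto
      moreover have "K (mu ! i) dvd L" unfolding L_def using that by (intro prod_list_dvd) auto
      ultimately show ?thesis using ripow_dvd p(3) that by simp
    qed
    have "(ri^^L) \<circ> p \<in> IP" using good_IP[OF good_ripow p(2)] .
    moreover have "p (length mu) \<in> E1" using p(2) unfolding inf_paths_def by auto
    ultimately show "g' \<in> cyl mu u" unfolding g' cyl_def using fixmu p(3,4) ripow_E1 by auto
  qed
  then show ?thesis using L1 by blast
qed

end



theorem lemma6p3:
  fixes V :: "nat \<Rightarrow> 'v set" and E1 :: "'e set" and r s :: "'e \<Rightarrow> 'v"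
    and lab :: "'e \<Rightarrow> nat"
  assumes bd: "bratteli_diagram V E1 r s"
    and big: "\<And>n v w. v \<in> V n \<Longrightarrow> w \<in> V (Suc n) \<Longrightarrow> kk E1 r s v w > n"
    and labelling: "\<And>n v w. v \<in> V n \<Longrightarrow> w \<in> V (Suc n) \<Longrightarrow>
                       bij_betw lab (edges_between E1 r s v w) {..<kk E1 r s v w}"
  defines "G \<equiv> graph_groupoid E1 r s"
    and "T \<equiv> groupoid_top (\<Union>n. V n) E1 r s"
    and "G0 \<equiv> gunits E1 r s"
    and "\<alpha> \<equiv> alpha_G E1 r s lab"
  shows "groupoid_automorphism G \<alpha> \<and> homeomorphic_map T T \<alpha> \<and>
         (\<forall>x\<in>G0. \<forall>l::int. gorbit G x = gorbit G (gpow G \<alpha> l x) \<longrightarrow> l = 0) \<and>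
         (\<exists>\<B>. (\<forall>B\<in>\<B>. B \<subseteq> G0 \<and> openin T B \<and> compactin T B \<and> bisection G B) \<and>
              (\<forall>U. openin (subtopology T G0) U \<longrightarrow> (\<exists>\<B>'\<subseteq>\<B>. \<Union>\<B>' = U)) \<and>
              (\<forall>B\<in>\<B>. \<exists>l::int. l \<ge> 1 \<and> gpow G \<alpha> (- l) ` B \<subseteq> B))"
proof -
  interpret brat V E1 r s lab using bd big labelling by unfold_locales auto
  have Ge: "G = GG" by (simp add: G_def)
  have Te: "T = TT" by (simp add: T_def TT_eq)
  have ae: "\<alpha> = em \<rho>" by (simp add: \<alpha>_def alpha_eq)
  define \<B> where "\<B> = {cyl mu u | mu u. FP u mu}"
  have P1: "\<forall>B\<in>\<B>. B \<subseteq> G0 \<and> openin T B \<and> compactin T B \<and> bisection G B"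
  proof
    fix B assume "B \<in> \<B>"
    then obtain mu u where B: "B = cyl mu u" "FP u mu" unfolding \<B>_def by blast
    have "B \<subseteq> G0" unfolding G0_def B(1) by (rule cyl_sub_G0)
    moreover have "openin T B"
    proof -
      have "Zset E1 r s mu mu u \<in> SS" using B(2) by blast
      then show ?thesis unfolding Te B(1) Zset_cyl[OF B(2), symmetric] by (rule topology_generated_by_Basis)
    qed
    moreover have "compactin T B" unfolding Te B(1) by (rule compact_cyl[OF B(2)])
    moreover have "bisection G B"
    proof -
      have gr: "grange g = g" "gsource g = g" if "g \<in> B" for g
        using that unfolding B(1) cyl_def grange_def gsource_def by auto
      have "inj_on grange B" "inj_on gsource B" unfolding inj_on_def using gr by metis+
      moreover have "B \<subseteq> GG" using cyl_GG[OF B(2)] unfolding B(1) .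
      ultimately show ?thesis unfolding bisection_def Ge by blast
    qed
    ultimately show "B \<subseteq> G0 \<and> openin T B \<and> compactin T B \<and> bisection G B" by blast
  qed
  have P2: "\<forall>U. openin (subtopology T G0) U \<longrightarrow> (\<exists>\<B>'\<subseteq>\<B>. \<Union>\<B>' = U)"
  proof (intro allI impI)
    fix U assume "openin (subtopology T G0) U"
    then obtain Ob where Ob: "openin TT Ob" "U = Ob \<inter> G0" unfolding openin_subtopology Te by blast
    have gen: "generate_topology_on SS Ob" using Ob(1) openin_topology_generated_by by blast
    define B' where "B' = {B\<in>\<B>. B \<subseteq> U}"
    have "U \<subseteq> \<Union>B'"
    proof
      fix g assume g: "g \<in> U"
      then have gO: "g \<in> Ob" "g \<in> gunits E1 r s" unfolding Ob(2) G0_def by auto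
      then obtain p where p: "g = (p,0,p)" "p \<in> IP" unfolding gunits_def by blast
      have "(p,0,p) \<in> Ob" using gO(1) p(1) by simp
      from nbhd[OF gen p(2) this] obtain n where n: "cyl (map p [0..<n]) (r (p n)) \<subseteq> Ob" by blast
      have c1: "cyl (map p [0..<n]) (r (p n)) \<in> \<B>" unfolding \<B>_def using fin_path_map[OF p(2)] by blast
      have c2: "cyl (map p [0..<n]) (r (p n)) \<subseteq> U"
        using n cyl_sub_G0[of "map p [0..<n]" "r (p n)"] unfolding Ob(2) G0_def by blast
      have c3: "g \<in> cyl (map p [0..<n]) (r (p n))" using cyl_self[OF p(2)] p(1) by simp
      have "cyl (map p [0..<n]) (r (p n)) \<in> B'" unfolding B'_def using c1 c2 by blast
      then show "g \<in> \<Union>B'" using c3 by blast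
    qed
    moreover have "\<Union>B' \<subseteq> U" unfolding B'_def by blast
    ultimately have "\<Union>B' = U" by (rule subset_antisym[rotated])
    moreover have "B' \<subseteq> \<B>" unfolding B'_def by blast
    ultimately show "\<exists>\<B>'\<subseteq>\<B>. \<Union>\<B>' = U" by blast
  qed
  have P3: "\<forall>B\<in>\<B>. \<exists>l::int. l \<ge> 1 \<and> gpow G \<alpha> (- l) ` B \<subseteq> B"
  proof
    fix B assume "B \<in> \<B>"
    then obtain mu u where B: "B = cyl mu u" "FP u mu" unfolding \<B>_def by blast
    show "\<exists>l::int. l \<ge> 1 \<and> gpow G \<alpha> (- l) ` B \<subseteq> B"
      unfolding B(1) Ge ae by (rule shrink[OF B(2)])
  qed
  have W: "\<forall>x\<in>G0. \<forall>l::int. gorbit G x = gorbit G (gpow G \<alpha> l x) \<longrightarrow> l = 0"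
  proof (intro ballI allI impI)
    fix x l assume "x \<in> G0" "gorbit G x = gorbit G (gpow G \<alpha> l x)"
    then show "l = 0" unfolding Ge ae G0_def by (rule wandering)
  qed
  have A1: "groupoid_automorphism G \<alpha>" unfolding Ge ae by (rule auto_alpha)
  have A2: "homeomorphic_map T T \<alpha>" unfolding Te ae by (rule homeo)
  have A4: "\<exists>\<B>. (\<forall>B\<in>\<B>. B \<subseteq> G0 \<and> openin T B \<and> compactin T B \<and> bisection G B) \<and>
              (\<forall>U. openin (subtopology T G0) U \<longrightarrow> (\<exists>\<B>'\<subseteq>\<B>. \<Union>\<B>' = U)) \<and>
              (\<forall>B\<in>\<B>. \<exists>l::int. l \<ge> 1 \<and> gpow G \<alpha> (- l) ` B \<subseteq> B)"
    by (rule exI[of _ \<B>], intro conjI, fact P1, fact P2, fact P3)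
  show ?thesis by (intro conjI, fact A1, fact A2, fact W, fact A4)
qed



end
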